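(* Let $K$ be a binomial principal ideal domain. Every finitely generated $2$-nilpotent $K$-group without $K$-torsion is regular.
   Context: $K$-groups are nilpotent groups with exponents in the binomial domain $K$ (P. Hall). $Is(N)=\{x\in G: x^\alpha\in N\text{ for some }0\ne\alpha\in K\}$; $I(G)=Is(G')\cap Z(G)$; an addition is a $K$-subgroup $G_0\le Z(G)$ with $Z(G)=G_0\oplus I(G)$. $G$ is regular if $G=H\times G_0$ for some addition $G_0$ and some $K$-subgroup $H$ with $Is(H')\ge Z(H)$ (equivalently $Is(G'Z(G))=Is(G')Z(G)$). *)

theory Defs
  imports "HOL-Algebra.Group"
begin

definition binomial_domain :: "'k::idom itself \<Rightarrow> bool" where
  "binomial_domain _ \<longleftrightarrow>
     (\<forall>n::nat. n \<noteq> 0 \<longrightarrow> (of_nat n :: 'k) \<noteq> 0) \<and>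
     (\<forall>(a::'k) (n::nat). \<exists>b::'k. of_nat (fact n) * b = (\<Prod>i<n. a - of_nat i))"

definition is_ideal :: "'k::comm_ring_1 set \<Rightarrow> bool" where
  "is_ideal I \<longleftrightarrow> 0 \<in> I \<and> (\<forall>x\<in>I. \<forall>y\<in>I. x + y \<in> I) \<and> (\<forall>r. \<forall>x\<in>I. r * x \<in> I)"

definition principal_ideal_domain :: "'k::idom itself \<Rightarrow> bool" where
  "principal_ideal_domain _ \<longleftrightarrow>
     (\<forall>I::'k set. is_ideal I \<longrightarrow> (\<exists>g. I = {r * g | r. True}))"

definition kbinom :: "'k::idom \<Rightarrow> nat \<Rightarrow> 'k" where
  "kbinom a n = (THE b. of_nat (fact n) * b = (\<Prod>i<n. a - of_nat i))"

definition gcomm :: "('g, 'm) monoid_scheme \<Rightarrow> 'g \<Rightarrow> 'g \<Rightarrow> 'g" where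
  "gcomm G x y = inv\<^bsub>G\<^esub> x \<otimes>\<^bsub>G\<^esub> inv\<^bsub>G\<^esub> y \<otimes>\<^bsub>G\<^esub> x \<otimes>\<^bsub>G\<^esub> y"

definition nilpotent2 :: "('g, 'm) monoid_scheme \<Rightarrow> bool" where
  "nilpotent2 G \<longleftrightarrow> group G \<and>
     (\<forall>x\<in>carrier G. \<forall>y\<in>carrier G. \<forall>z\<in>carrier G.
        gcomm G x y \<otimes>\<^bsub>G\<^esub> z = z \<otimes>\<^bsub>G\<^esub> gcomm G x y)"

text \<open>P. Hall's K-group axioms for a group of class at most 2, with exponentiation
pw x a = x^a. In class at most 2 the Hall-Petresco words are
tau_1(x,y) = xy, tau_2(x,y) = [x,y], tau_i = 1 for i >= 3.\<close>

definition K_group2 :: "('g, 'm) monoid_scheme \<Rightarrow> ('g \<Rightarrow> 'k::idom \<Rightarrow> 'g) \<Rightarrow> bool" where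
  "K_group2 G pw \<longleftrightarrow> nilpotent2 G \<and>
     (\<forall>x\<in>carrier G. \<forall>a. pw x a \<in> carrier G) \<and>
     (\<forall>x\<in>carrier G. pw x 1 = x) \<and>
     (\<forall>x\<in>carrier G. \<forall>a b. pw x a \<otimes>\<^bsub>G\<^esub> pw x b = pw x (a + b)) \<and>
     (\<forall>x\<in>carrier G. \<forall>a b. pw (pw x a) b = pw x (a * b)) \<and>
     (\<forall>x\<in>carrier G. \<forall>h\<in>carrier G. \<forall>a.
        inv\<^bsub>G\<^esub> h \<otimes>\<^bsub>G\<^esub> pw x a \<otimes>\<^bsub>G\<^esub> h = pw (inv\<^bsub>G\<^esub> h \<otimes>\<^bsub>G\<^esub> x \<otimes>\<^bsub>G\<^esub> h) a) \<and>
     (\<forall>x\<in>carrier G. \<forall>y\<in>carrier G. \<forall>a.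
        pw x a \<otimes>\<^bsub>G\<^esub> pw y a = pw (x \<otimes>\<^bsub>G\<^esub> y) a \<otimes>\<^bsub>G\<^esub> pw (gcomm G x y) (kbinom a 2))"

definition K_subgroup :: "('g, 'm) monoid_scheme \<Rightarrow> ('g \<Rightarrow> 'k \<Rightarrow> 'g) \<Rightarrow> 'g set \<Rightarrow> bool" where
  "K_subgroup G pw H \<longleftrightarrow> subgroup H G \<and> (\<forall>x\<in>H. \<forall>a. pw x a \<in> H)"

definition K_gen :: "('g, 'm) monoid_scheme \<Rightarrow> ('g \<Rightarrow> 'k \<Rightarrow> 'g) \<Rightarrow> 'g set \<Rightarrow> 'g set" where
  "K_gen G pw S = \<Inter>{H. K_subgroup G pw H \<and> S \<subseteq> H}"

definition K_finitely_generated :: "('g, 'm) monoid_scheme \<Rightarrow> ('g \<Rightarrow> 'k \<Rightarrow> 'g) \<Rightarrow> bool" where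
  "K_finitely_generated G pw \<longleftrightarrow>
     (\<exists>S. finite S \<and> S \<subseteq> carrier G \<and> K_gen G pw S = carrier G)"

definition K_torsion_free :: "('g, 'm) monoid_scheme \<Rightarrow> ('g \<Rightarrow> 'k::idom \<Rightarrow> 'g) \<Rightarrow> bool" where
  "K_torsion_free G pw \<longleftrightarrow>
     (\<forall>x\<in>carrier G. \<forall>a. a \<noteq> 0 \<longrightarrow> pw x a = \<one>\<^bsub>G\<^esub> \<longrightarrow> x = \<one>\<^bsub>G\<^esub>)"

text \<open>Notions relative to a K-subgroup H of G (take H = carrier G for G itself).\<close>

definition derived :: "('g, 'm) monoid_scheme \<Rightarrow> ('g \<Rightarrow> 'k \<Rightarrow> 'g) \<Rightarrow> 'g set \<Rightarrow> 'g set" where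
  "derived G pw H = K_gen G pw {gcomm G x y | x y. x \<in> H \<and> y \<in> H}"

definition center_of :: "('g, 'm) monoid_scheme \<Rightarrow> 'g set \<Rightarrow> 'g set" where
  "center_of G H = {x \<in> H. \<forall>y\<in>H. x \<otimes>\<^bsub>G\<^esub> y = y \<otimes>\<^bsub>G\<^esub> x}"

definition isolator :: "('g, 'm) monoid_scheme \<Rightarrow> ('g \<Rightarrow> 'k::idom \<Rightarrow> 'g) \<Rightarrow> 'g set \<Rightarrow> 'g set \<Rightarrow> 'g set" where
  "isolator G pw H N = {x \<in> H. \<exists>a. a \<noteq> 0 \<and> pw x a \<in> N}"

definition I_of :: "('g, 'm) monoid_scheme \<Rightarrow> ('g \<Rightarrow> 'k::idom \<Rightarrow> 'g) \<Rightarrow> 'g set" where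
  "I_of G pw = isolator G pw (carrier G) (derived G pw (carrier G)) \<inter> center_of G (carrier G)"

definition is_addition :: "('g, 'm) monoid_scheme \<Rightarrow> ('g \<Rightarrow> 'k::idom \<Rightarrow> 'g) \<Rightarrow> 'g set \<Rightarrow> bool" where
  "is_addition G pw G0 \<longleftrightarrow> K_subgroup G pw G0 \<and> G0 \<subseteq> center_of G (carrier G) \<and>
     G0 \<inter> I_of G pw = {\<one>\<^bsub>G\<^esub>} \<and>
     {a \<otimes>\<^bsub>G\<^esub> b | a b. a \<in> G0 \<and> b \<in> I_of G pw} = center_of G (carrier G)"

text \<open>Regular: G = H x G0 (internal direct product) for an addition G0 and a
K-subgroup H with Is(H') \<supseteq> Z(H). (G0 is central, so H and G0 are normal and commute.)\<close>
definition K_regular :: "('g, 'm) monoid_scheme \<Rightarrow> ('g \<Rightarrow> 'k::idom \<Rightarrow> 'g) \<Rightarrow> bool" where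
  "K_regular G pw \<longleftrightarrow> (\<exists>G0 H. is_addition G pw G0 \<and> K_subgroup G pw H \<and>
     center_of G H \<subseteq> isolator G pw H (derived G pw H) \<and>
     H \<inter> G0 = {\<one>\<^bsub>G\<^esub>} \<and>
     {h \<otimes>\<^bsub>G\<^esub> g | h g. h \<in> H \<and> g \<in> G0} = carrier G)"

end

theory Submission
  imports Defs "HOL-Algebra.Coset"
begin


fun lc :: "('a \<Rightarrow> 'a \<Rightarrow> 'a) \<Rightarrow> 'a \<Rightarrow> ('k \<Rightarrow> 'a \<Rightarrow> 'a) \<Rightarrow> (nat \<Rightarrow> 'k) \<Rightarrow> (nat \<Rightarrow> 'a) \<Rightarrow> nat \<Rightarrow> 'a" where
  "lc add zr sm c v 0 = zr"
| "lc add zr sm c v (Suc n) = add (lc add zr sm c v n) (sm (c n) (v n))"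

locale kmod =
  fixes A :: "'a set" and add :: "'a \<Rightarrow> 'a \<Rightarrow> 'a" and zr :: 'a and sm :: "'k::idom \<Rightarrow> 'a \<Rightarrow> 'a"
  assumes add_closed: "x \<in> A \<Longrightarrow> y \<in> A \<Longrightarrow> add x y \<in> A"
  and zr_closed: "zr \<in> A"
  and sm_closed: "x \<in> A \<Longrightarrow> sm a x \<in> A"
  and add_assoc: "x \<in> A \<Longrightarrow> y \<in> A \<Longrightarrow> z \<in> A \<Longrightarrow> add (add x y) z = add x (add y z)"
  and add_comm: "x \<in> A \<Longrightarrow> y \<in> A \<Longrightarrow> add x y = add y x"
  and zr_add: "x \<in> A \<Longrightarrow> add zr x = x"
  and sm_distl: "x \<in> A \<Longrightarrow> sm (a + b) x = add (sm a x) (sm b x)"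
  and sm_distr: "x \<in> A \<Longrightarrow> y \<in> A \<Longrightarrow> sm a (add x y) = add (sm a x) (sm a y)"
  and sm_sm: "x \<in> A \<Longrightarrow> sm a (sm b x) = sm (a * b) x"
  and sm_one: "x \<in> A \<Longrightarrow> sm 1 x = x"
  and sm_zero: "x \<in> A \<Longrightarrow> sm 0 x = zr"
begin

abbreviation "L \<equiv> lc add zr sm"

lemma add_zr: "x \<in> A \<Longrightarrow> add x zr = x"
  using add_comm zr_add zr_closed by metis

lemma neg_r: "x \<in> A \<Longrightarrow> add x (sm (-1) x) = zr"
  by (metis sm_distl sm_one sm_zero add.right_inverse)

lemma neg_l: "x \<in> A \<Longrightarrow> add (sm (-1) x) x = zr"
  by (metis neg_r add_comm sm_closed)

lemma sm_zr: "sm a zr = zr"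
  by (metis sm_sm sm_zero zr_closed mult_zero_right)

lemma add_swap: "a \<in> A \<Longrightarrow> b \<in> A \<Longrightarrow> c \<in> A \<Longrightarrow> d \<in> A \<Longrightarrow>
   add (add a b) (add c d) = add (add a c) (add b d)"
  by (metis add_assoc add_comm add_closed)

lemma cancel_l: "x \<in> A \<Longrightarrow> y \<in> A \<Longrightarrow> add (sm (-1) x) (add x y) = y"
  by (metis add_assoc neg_l sm_closed zr_add)

lemma sm_comm: "x \<in> A \<Longrightarrow> sm a (sm b x) = sm b (sm a x)"
  by (simp add: sm_sm mult.commute)

definition submod :: "'a set \<Rightarrow> bool" where
  "submod S \<longleftrightarrow> S \<subseteq> A \<and> zr \<in> S \<and> (\<forall>x\<in>S. \<forall>y\<in>S. add x y \<in> S) \<and> (\<forall>x\<in>S. \<forall>a. sm a x \<in> S)"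

definition pure :: "'a set \<Rightarrow> bool" where
  "pure S \<longleftrightarrow> (\<forall>x\<in>A. \<forall>a. a \<noteq> 0 \<longrightarrow> sm a x \<in> S \<longrightarrow> x \<in> S)"

lemma submod_cancel:
  assumes "submod S" "x \<in> A" "y \<in> A" "add x y \<in> S" "x \<in> S" shows "y \<in> S"
proof -
  have "add (sm (-1) x) (add x y) \<in> S" using assms unfolding submod_def by blast
  then show ?thesis using cancel_l assms by simp
qed

lemma lc_closed: "\<forall>i<n. v i \<in> A \<Longrightarrow> L c v n \<in> A"
  by (induction n) (auto intro: add_closed zr_closed sm_closed)

lemma lc_in_sub: "submod S \<Longrightarrow> \<forall>i<n. v i \<in> S \<Longrightarrow> L c v n \<in> S"
  by (induction n) (auto simp: submod_def)

lemma lc_cong: "\<forall>i<n. c i = c' i \<and> v i = v' i \<Longrightarrow> L c v n = L c' v' n"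
  by (induction n) auto

lemma lc_zero_coeffs: "\<forall>i<n. c i = 0 \<Longrightarrow> \<forall>i<n. v i \<in> A \<Longrightarrow> L c v n = zr"
  by (induction n) (auto simp: sm_zero add_zr zr_closed)

lemma lc_vadd: "\<forall>i<n. u i \<in> A \<and> v i \<in> A \<Longrightarrow>
   L c (\<lambda>i. add (u i) (v i)) n = add (L c u n) (L c v n)"
proof (induction n)
  case 0 then show ?case by (simp add: zr_add zr_closed)
next
  case (Suc n)
  then show ?case
    by (simp add: sm_distr add_swap lc_closed sm_closed)
qed

lemma lc_cadd: "\<forall>i<n. v i \<in> A \<Longrightarrow>
   L (\<lambda>i. c i + d i) v n = add (L c v n) (L d v n)"
proof (induction n)
  case 0 then show ?case by (simp add: zr_add zr_closed)
next
  case (Suc n)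
  then show ?case
    by (simp add: sm_distl add_swap lc_closed sm_closed)
qed

lemma lc_sm: "\<forall>i<n. v i \<in> A \<Longrightarrow> sm a (L c v n) = L (\<lambda>i. a * c i) v n"
  by (induction n) (auto simp: sm_zr sm_distr lc_closed sm_closed sm_sm)

definition spanset :: "(nat \<Rightarrow> 'a) \<Rightarrow> nat \<Rightarrow> 'a set" where
  "spanset e n = {L c e n | c. True}"

lemma spanset_submod: "\<forall>i<n. e i \<in> A \<Longrightarrow> submod (spanset e n)"
  unfolding submod_def spanset_def
proof (intro conjI)
  assume e: "\<forall>i<n. e i \<in> A"
  show "{L c e n |c. True} \<subseteq> A" using lc_closed[OF e] by blast
  show "zr \<in> {L c e n |c. True}" using lc_zero_coeffs[of n "\<lambda>_. 0" e] e by (metis (mono_tags, lifting) mem_Collect_eq)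
  show "\<forall>x\<in>{L c e n |c. True}. \<forall>y\<in>{L c e n |c. True}. add x y \<in> {L c e n |c. True}"
  proof (intro ballI)
    fix x y assume "x \<in> {L c e n |c. True}" "y \<in> {L c e n |c. True}"
    then obtain c d where "x = L c e n" "y = L d e n" by blast
    then have "add x y = L (\<lambda>i. c i + d i) e n" using lc_cadd[OF e] by simp
    then show "add x y \<in> {L c e n |c. True}" by blast
  qed
  show "\<forall>x\<in>{L c e n |c. True}. \<forall>a. sm a x \<in> {L c e n |c. True}"
  proof (intro ballI allI)
    fix x a assume "x \<in> {L c e n |c. True}"
    then obtain c where "x = L c e n" by blast
    then have "sm a x = L (\<lambda>i. a * c i) e n" using lc_sm[OF e] by simp
    then show "sm a x \<in> {L c e n |c. True}" by blast
  qed
qed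

definition indep_over :: "'a set \<Rightarrow> (nat \<Rightarrow> 'a) \<Rightarrow> nat \<Rightarrow> bool" where
  "indep_over Q e n \<longleftrightarrow> (\<forall>c. L c e n \<in> Q \<longrightarrow> (\<forall>i<n. c i = 0))"

definition gen_over :: "'a set \<Rightarrow> (nat \<Rightarrow> 'a) \<Rightarrow> nat \<Rightarrow> bool" where
  "gen_over Q g m \<longleftrightarrow> (\<forall>i<m. g i \<in> A) \<and> (\<forall>x\<in>A. \<exists>q\<in>Q. \<exists>c. x = add q (L c g m))"

lemma proj:
  assumes Q: "submod Q" and Q': "submod Q'" and QQ: "Q \<subseteq> Q'"
    and g: "gen_over Q g m" and e: "gen_over Q' e n" and ind: "indep_over Q' e n"
  shows "\<exists>w. (\<forall>i<m. w i \<in> Q') \<and> (\<forall>x\<in>Q'. \<exists>q\<in>Q. \<exists>c. x = add q (L c w m))"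
proof -
  have eA: "\<forall>i<n. e i \<in> A" using e unfolding gen_over_def by blast
  have gA: "\<forall>i<m. g i \<in> A" using g unfolding gen_over_def by blast
  have "\<forall>i<m. \<exists>w E. w \<in> Q' \<and> E \<in> spanset e n \<and> g i = add w E"
    using e gA unfolding gen_over_def spanset_def by blast
  then obtain w E where wE: "\<forall>i<m. w i \<in> Q' \<and> E i \<in> spanset e n \<and> g i = add (w i) (E i)"
    by metis
  have Q'A: "Q' \<subseteq> A" using Q' unfolding submod_def by blast
  have QA: "Q \<subseteq> A" using Q unfolding submod_def by blast
  have sp: "submod (spanset e n)" using spanset_submod[OF eA] .
  have EA: "\<forall>i<m. E i \<in> A" using wE sp unfolding submod_def by blast
  have wA: "\<forall>i<m. w i \<in> A" using wE Q'A by blast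
  have "\<forall>x\<in>Q'. \<exists>q\<in>Q. \<exists>c. x = add q (L c w m)"
  proof
    fix x assume x: "x \<in> Q'"
    then obtain q c where q: "q \<in> Q" and xq: "x = add q (L c g m)" using g Q'A unfolding gen_over_def by blast
    have "L c g m = L c (\<lambda>i. add (w i) (E i)) m" using wE by (intro lc_cong) auto
    also have "\<dots> = add (L c w m) (L c E m)" using lc_vadd wA EA by blast
    finally have eq: "x = add (add q (L c w m)) (L c E m)"
      using xq add_assoc q QA lc_closed wA EA by auto
    have LEs: "L c E m \<in> spanset e n" using lc_in_sub[OF sp] wE by blast
    have qw: "add q (L c w m) \<in> Q'" using q QQ lc_in_sub[OF Q'] wE Q' unfolding submod_def by blast
    have "L c E m \<in> Q'"
      using submod_cancel[OF Q' _ _ _ qw] eq x Q'A qw lc_closed EA by auto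
    then obtain d where d: "L c E m = L d e n" "L d e n \<in> Q'" using LEs unfolding spanset_def by auto
    then have "\<forall>i<n. d i = 0" using ind unfolding indep_over_def by blast
    then have "L c E m = zr" using d lc_zero_coeffs eA by auto
    then have "x = add q (L c w m)" using eq add_zr q QA lc_closed wA add_closed by auto
    then show "\<exists>q\<in>Q. \<exists>c. x = add q (L c w m)" using q by blast
  qed
  then show ?thesis using wE by blast
qed

definition RR :: "'a set \<Rightarrow> 'a \<Rightarrow> 'k \<Rightarrow> 'a \<Rightarrow> bool" where
  "RR Q g d x \<longleftrightarrow> (\<exists>q\<in>Q. \<exists>b. sm d x = add q (sm b g))"

lemma RR_Q: "submod Q \<Longrightarrow> g \<in> A \<Longrightarrow> q \<in> Q \<Longrightarrow> RR Q g d q"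
  unfolding RR_def submod_def
  by (rule bexI[of _ "sm d q"]) (auto intro!: exI[of _ 0] simp: sm_zero add_zr sm_closed)

lemma RR_mult: assumes "submod Q" "g \<in> A" "x \<in> A" "RR Q g d x" shows "RR Q g (e * d) x"
proof -
  obtain q b where q: "q \<in> Q" "sm d x = add q (sm b g)" using assms unfolding RR_def by blast
  have qA: "q \<in> A" using q assms unfolding submod_def by blast
  have "sm (e*d) x = sm e (sm d x)" using sm_sm assms by simp
  also have "\<dots> = add (sm e q) (sm (e*b) g)" using q sm_distr qA sm_closed assms sm_sm by simp
  finally show ?thesis unfolding RR_def using q assms unfolding submod_def by blast
qed

lemma RR_add: assumes "submod Q" "g \<in> A" "x \<in> A" "y \<in> A" "RR Q g d x" "RR Q g d y"
  shows "RR Q g d (add x y)"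
proof -
  obtain q b where q: "q \<in> Q" "sm d x = add q (sm b g)" using assms unfolding RR_def by blast
  obtain q' b' where q': "q' \<in> Q" "sm d y = add q' (sm b' g)" using assms unfolding RR_def by blast
  have qA: "q \<in> A" "q' \<in> A" using q q' assms unfolding submod_def by blast+
  have "sm d (add x y) = add (add q (sm b g)) (add q' (sm b' g))" using q q' sm_distr assms by simp
  also have "\<dots> = add (add q q') (sm (b + b') g)" using add_swap qA sm_closed assms sm_distl by simp
  finally show ?thesis unfolding RR_def using q q' assms unfolding submod_def by blast
qed

lemma RR_sm: assumes "submod Q" "g \<in> A" "x \<in> A" "RR Q g d x" shows "RR Q g d (sm c x)"
proof -
  obtain q b where q: "q \<in> Q" "sm d x = add q (sm b g)" using assms unfolding RR_def by blast
  have qA: "q \<in> A" using q assms unfolding submod_def by blast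
  have "sm d (sm c x) = sm c (sm d x)" using sm_comm assms by simp
  also have "\<dots> = add (sm c q) (sm (c*b) g)" using q sm_distr qA sm_closed assms sm_sm by simp
  finally show ?thesis unfolding RR_def using q assms unfolding submod_def by blast
qed

lemma RR_lc:
  assumes Q: "submod Q" and g: "g \<in> A"
  shows "\<forall>i<j. w i \<in> A \<and> (\<exists>a. a \<noteq> 0 \<and> RR Q g a (w i)) \<Longrightarrow> \<exists>d. d \<noteq> 0 \<and> (\<forall>c. RR Q g d (L c w j))"
proof (induction j)
  case 0
  have "RR Q g 1 zr" using RR_Q[OF Q g] Q unfolding submod_def by blast
  then show ?case by (intro exI[of _ 1]) auto
next
  case (Suc j)
  then obtain d where d: "d \<noteq> 0" "\<forall>c. RR Q g d (L c w j)" by auto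
  obtain a where a: "a \<noteq> 0" "RR Q g a (w j)" using Suc.prems by auto
  have wA: "\<forall>i<j. w i \<in> A" "w j \<in> A" using Suc.prems by auto
  have "\<forall>c. RR Q g (a * d) (L c w (Suc j))"
  proof
    fix c
    have 1: "RR Q g (a * d) (L c w j)" using RR_mult[OF Q g lc_closed[OF wA(1)]] d by blast
    have "RR Q g (d * a) (w j)" using RR_mult[OF Q g wA(2) a(2)] .
    then have 2: "RR Q g (a * d) (sm (c j) (w j))" using RR_sm[OF Q g wA(2)] by (simp add: mult.commute)
    show "RR Q g (a * d) (L c w (Suc j))"
      using RR_add[OF Q g lc_closed[OF wA(1)] sm_closed[OF wA(2)] 1 2] by simp
  qed
  then show ?case using a d by (intro exI[of _ "a*d"]) auto
qed

lemma basis_exists: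
  assumes pid: "principal_ideal_domain TYPE('k)"
  shows "submod Q \<Longrightarrow> pure Q \<Longrightarrow> gen_over Q g m \<Longrightarrow> \<exists>n e. gen_over Q e n \<and> indep_over Q e n"
proof (induction m arbitrary: Q g)
  case 0
  then have QA: "Q \<subseteq> A" unfolding submod_def by blast
  have "gen_over Q g 0"
    unfolding gen_over_def
  proof (intro conjI ballI)
    fix x assume "x \<in> A"
    then show "\<exists>q\<in>Q. \<exists>c. x = add q (L c g 0)"
      using 0 unfolding gen_over_def by auto
  qed auto
  moreover have "indep_over Q g 0" unfolding indep_over_def by auto
  ultimately show ?case by blast
next
  case (Suc m)
  note Q = Suc.prems(1) and pQ = Suc.prems(2) and gen = Suc.prems(3)
  have QA: "Q \<subseteq> A" using Q unfolding submod_def by blast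
  have gA: "\<forall>i<Suc m. g i \<in> A" using gen unfolding gen_over_def by blast
  have gmA: "g m \<in> A" using gA by auto
  have gAm: "\<forall>i<m. g i \<in> A" using gA by auto
  show ?case
  proof (cases "\<exists>b. b \<noteq> 0 \<and> sm b (g m) \<in> Q")
    case True
    then have gmQ: "g m \<in> Q" using pQ gmA unfolding pure_def by blast
    have "gen_over Q g m" unfolding gen_over_def
    proof (intro conjI ballI)
      show "\<forall>i<m. g i \<in> A" using gAm .
      fix x assume "x \<in> A"
      then obtain q c where q: "q \<in> Q" "x = add q (L c g (Suc m))" using gen unfolding gen_over_def by blast
      have "x = add (add q (sm (c m) (g m))) (L c g m)"
        using q add_assoc add_comm QA lc_closed gAm sm_closed gmA add_closed
        by (smt (verit) lc.simps(2) subsetD)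
      moreover have "add q (sm (c m) (g m)) \<in> Q" using q gmQ Q unfolding submod_def by blast
      ultimately show "\<exists>q\<in>Q. \<exists>c. x = add q (L c g m)" by blast
    qed
    then show ?thesis using Suc.IH[OF Q pQ] by blast
  next
    case False
    note notQ = this
    define Q' where "Q' = {x\<in>A. \<exists>a. a \<noteq> 0 \<and> RR Q (g m) a x}"
    have Q'A: "Q' \<subseteq> A" unfolding Q'_def by blast
    have QQ': "Q \<subseteq> Q'" unfolding Q'_def using RR_Q[OF Q gmA] QA by (auto intro!: exI[of _ 1])
    have sQ': "submod Q'" unfolding submod_def
    proof (intro conjI ballI allI)
      show "Q' \<subseteq> A" using Q'A .
      show "zr \<in> Q'" using QQ' Q unfolding submod_def by blast
      fix x y assume x: "x \<in> Q'" and y: "y \<in> Q'"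
      then obtain a b where ab: "a \<noteq> 0" "RR Q (g m) a x" "b \<noteq> 0" "RR Q (g m) b y" "x \<in> A" "y \<in> A"
        unfolding Q'_def by blast
      have "RR Q (g m) (b * a) x" "RR Q (g m) (a * b) y" using RR_mult[OF Q gmA] ab by blast+
      then have "RR Q (g m) (a * b) (add x y)" using RR_add[OF Q gmA ab(5,6)] by (simp add: mult.commute)
      then show "add x y \<in> Q'" unfolding Q'_def using ab add_closed by (auto intro!: exI[of _ "a*b"])
    next
      fix x c assume x: "x \<in> Q'"
      then obtain a where ab: "a \<noteq> 0" "RR Q (g m) a x" "x \<in> A"
        unfolding Q'_def by blast
      then show "sm c x \<in> Q'" unfolding Q'_def using RR_sm[OF Q gmA] sm_closed by blast
    qed
    have pQ': "pure Q'" unfolding pure_def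
    proof (intro ballI allI impI)
      fix x a assume x: "x \<in> A" and a: "a \<noteq> 0" and ax: "sm a x \<in> Q'"
      then obtain b where b: "b \<noteq> 0" "RR Q (g m) b (sm a x)" unfolding Q'_def by blast
      then have "RR Q (g m) (b * a) x" unfolding RR_def using sm_sm x by simp
      then show "x \<in> Q'" unfolding Q'_def using a b x by (auto intro!: exI[of _ "b*a"])
    qed
    have gmQ': "g m \<in> Q'" unfolding Q'_def RR_def using gmA Q unfolding submod_def
      by (auto intro!: exI[of _ 1] bexI[of _ zr] simp: zr_add sm_closed)
    have genQ': "gen_over Q' g m" unfolding gen_over_def
    proof (intro conjI ballI)
      show "\<forall>i<m. g i \<in> A" using gAm .
      fix x assume "x \<in> A"
      then obtain q c where q: "q \<in> Q" "x = add q (L c g (Suc m))" using gen unfolding gen_over_def by blast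
      have "x = add (add q (sm (c m) (g m))) (L c g m)"
        using q add_assoc add_comm QA lc_closed gAm sm_closed gmA add_closed
        by (smt (verit) lc.simps(2) subsetD)
      moreover have "add q (sm (c m) (g m)) \<in> Q'" using q gmQ' QQ' sQ' unfolding submod_def by blast
      ultimately show "\<exists>q\<in>Q'. \<exists>c. x = add q (L c g m)" by blast
    qed
    obtain n e where ne: "gen_over Q' e n" "indep_over Q' e n" using Suc.IH[OF sQ' pQ' genQ'] by blast
    have eA: "\<forall>i<n. e i \<in> A" using ne unfolding gen_over_def by blast
    obtain w where w: "\<forall>i<Suc m. w i \<in> Q'" "\<forall>x\<in>Q'. \<exists>q\<in>Q. \<exists>c. x = add q (L c w (Suc m))"
      using proj[OF Q sQ' QQ' gen ne] by blast
    have "\<forall>i<Suc m. w i \<in> A \<and> (\<exists>a. a \<noteq> 0 \<and> RR Q (g m) a (w i))" using w(1) unfolding Q'_def by blast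
    then obtain d where d: "d \<noteq> 0" "\<forall>c. RR Q (g m) d (L c w (Suc m))" using RR_lc[OF Q gmA] by blast
    have wA: "\<forall>i<Suc m. w i \<in> A" using w(1) Q'A by blast
    have RQ': "\<forall>x\<in>Q'. RR Q (g m) d x"
    proof
      fix x assume "x \<in> Q'"
      then obtain q c where qc: "q \<in> Q" "x = add q (L c w (Suc m))" using w(2) by blast
      show "RR Q (g m) d x" using qc RR_add[OF Q gmA _ lc_closed[OF wA] RR_Q[OF Q gmA qc(1)] d(2)[rule_format, of c]] QA
        by blast
    qed
    define J where "J = {b. \<exists>x\<in>Q'. \<exists>q\<in>Q. sm d x = add q (sm b (g m))}"
    have "is_ideal J" unfolding is_ideal_def
    proof (intro conjI ballI allI)
      show "0 \<in> J" unfolding J_def using sQ' Q unfolding submod_def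
        by (auto intro!: bexI[of _ zr] simp: sm_zr sm_zero gmA add_zr)
    next
      fix x y assume "x \<in> J" "y \<in> J"
      then obtain u v q q' where uv: "u \<in> Q'" "v \<in> Q'" "q \<in> Q" "q' \<in> Q"
        "sm d u = add q (sm x (g m))" "sm d v = add q' (sm y (g m))" unfolding J_def by blast
      have A: "u \<in> A" "v \<in> A" "q \<in> A" "q' \<in> A" using uv Q'A QA by blast+
      have "sm d (add u v) = add (add q q') (sm (x+y) (g m))"
        using uv A sm_distr add_swap sm_distl sm_closed gmA by simp
      moreover have "add u v \<in> Q'" "add q q' \<in> Q" using uv sQ' Q unfolding submod_def by blast+
      ultimately show "x + y \<in> J" unfolding J_def by blast
    next
      fix r x assume "x \<in> J"
      then obtain u q where uv: "u \<in> Q'" "q \<in> Q" "sm d u = add q (sm x (g m))" unfolding J_def by blast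
      have A: "u \<in> A" "q \<in> A" using uv Q'A QA by blast+
      have "sm d (sm r u) = sm r (sm d u)" using sm_comm A by simp
      also have "\<dots> = add (sm r q) (sm (r*x) (g m))"
        using uv A sm_distr sm_sm sm_closed gmA by simp
      finally have "sm d (sm r u) = add (sm r q) (sm (r*x) (g m))" .
      moreover have "sm r u \<in> Q'" "sm r q \<in> Q" using uv sQ' Q unfolding submod_def by blast+
      ultimately show "r * x \<in> J" unfolding J_def by blast
    qed
    then obtain \<beta> where beta: "J = {r * \<beta> | r. True}" using pid unfolding principal_ideal_domain_def by blast
    have "\<beta> \<in> J" using beta by (auto intro!: exI[of _ 1])
    then obtain f qf where f: "f \<in> Q'" "qf \<in> Q" "sm d f = add qf (sm \<beta> (g m))" unfolding J_def by blast
    have fA: "f \<in> A" using f Q'A by blast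
    have qfA: "qf \<in> A" using f QA by blast
    have "sm d (g m) = add zr (sm d (g m))" using zr_add sm_closed gmA by simp
    then have "d \<in> J" unfolding J_def using gmQ' Q unfolding submod_def by blast
    then have beta0: "\<beta> \<noteq> 0" using beta d by auto
    have fQ: "f \<notin> Q"
    proof
      assume "f \<in> Q"
      then have "sm d f \<in> Q" using Q unfolding submod_def by blast
      then have "sm \<beta> (g m) \<in> Q" using f submod_cancel[OF Q qfA sm_closed[OF gmA]] by simp
      then show False using notQ beta0 by blast
    qed
    have decomp: "\<forall>x\<in>Q'. \<exists>q\<in>Q. \<exists>r. x = add q (sm r f)"
    proof
      fix x assume x: "x \<in> Q'"
      then have xA: "x \<in> A" using Q'A by blast
      obtain q b where qb: "q \<in> Q" "sm d x = add q (sm b (g m))" using RQ' x unfolding RR_def by blast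
      have qA: "q \<in> A" using qb QA by blast
      have "b \<in> J" unfolding J_def using qb x by blast
      then obtain r where r: "b = r * \<beta>" using beta by blast
      define y where "y = add x (sm (-r) f)"
      have yA: "y \<in> A" unfolding y_def using xA fA add_closed sm_closed by blast
      have "sm d y = add (sm d x) (sm (-r) (sm d f))" unfolding y_def using sm_distr xA fA sm_closed sm_comm by simp
      also have "\<dots> = add (add q (sm b (g m))) (add (sm (-r) qf) (sm (-r * \<beta>) (g m)))"
        using qb f sm_distr qfA sm_closed gmA sm_sm by simp
      also have "\<dots> = add (add q (sm (-r) qf)) (add (sm b (g m)) (sm (-r * \<beta>) (g m)))"
        using add_swap qA sm_closed qfA gmA by simp
      also have "add (sm b (g m)) (sm (-r * \<beta>) (g m)) = zr"
        using sm_distl[OF gmA, symmetric] r sm_zero gmA by simp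
      finally have "sm d y = add q (sm (-r) qf)" using add_zr add_closed qA sm_closed qfA by simp
      then have "sm d y \<in> Q" using qb f Q unfolding submod_def by simp
      then have yQ: "y \<in> Q" using pQ d yA unfolding pure_def by blast
      have "add y (sm r f) = add x (add (sm (-r) f) (sm r f))"
        unfolding y_def using add_assoc xA sm_closed fA by simp
      also have "add (sm (-r) f) (sm r f) = zr" using sm_distl[OF fA, symmetric] sm_zero fA by simp
      finally have "x = add y (sm r f)" using add_zr xA by simp
      then show "\<exists>q\<in>Q. \<exists>r. x = add q (sm r f)" using yQ by blast
    qed
    define e' where "e' = e(n := f)"
    have e'A: "\<forall>i<Suc n. e' i \<in> A" unfolding e'_def using eA fA by auto
    have Le': "\<And>c. L c e' (Suc n) = add (L c e n) (sm (c n) f)"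
    proof -
      fix c
      have "L c (e(n := f)) n = L c e n" by (intro lc_cong) auto
      then show "L c e' (Suc n) = add (L c e n) (sm (c n) f)" unfolding e'_def by simp
    qed
    have "gen_over Q e' (Suc n)" unfolding gen_over_def
    proof (intro conjI ballI)
      show "\<forall>i<Suc n. e' i \<in> A" using e'A .
      fix x assume "x \<in> A"
      then obtain q' c where q': "q' \<in> Q'" "x = add q' (L c e n)" using ne unfolding gen_over_def by blast
      obtain q r where qr: "q \<in> Q" "q' = add q (sm r f)" using decomp q' by blast
      have qA: "q \<in> A" using qr QA by blast
      have "L (c(n := r)) e n = L c e n" by (intro lc_cong) auto
      moreover have "L (c(n := r)) e' (Suc n) = add (L (c(n:=r)) e n) (sm ((c(n:=r)) n) f)" by (rule Le')
      ultimately have "L (c(n := r)) e' (Suc n) = add (L c e n) (sm r f)" by simp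
      then have "x = add q (L (c(n := r)) e' (Suc n))"
        using q' qr add_assoc add_comm qA fA sm_closed lc_closed eA by metis
      then show "\<exists>q\<in>Q. \<exists>c. x = add q (L c e' (Suc n))" using qr by blast
    qed
    moreover have "indep_over Q e' (Suc n)" unfolding indep_over_def
    proof (rule allI, rule impI)
      fix c assume c: "L c e' (Suc n) \<in> Q"
      then have c1: "add (L c e n) (sm (c n) f) \<in> Q" using Le'[of c] by metis
      have "add (sm (c n) f) (L c e n) \<in> Q'" using c1 QQ' add_comm lc_closed eA sm_closed fA by auto
      moreover have "sm (c n) f \<in> Q'" using f sQ' unfolding submod_def by blast
      ultimately have "L c e n \<in> Q'" using submod_cancel[OF sQ' sm_closed[OF fA] lc_closed[OF eA]] by blast
      then have ci: "\<forall>i<n. c i = 0" using ne unfolding indep_over_def by blast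
      then have "L c e n = zr" using lc_zero_coeffs eA by blast
      then have "sm (c n) f \<in> Q" using c1 zr_add sm_closed fA by simp
      then have "c n = 0" using pQ fQ fA unfolding pure_def by blast
      then show "\<forall>i<Suc n. c i = 0" using ci less_Suc_eq by auto
    qed
    ultimately show ?thesis by blast
  qed
qed

lemma submod_kmod: "submod S \<Longrightarrow> kmod S add zr sm"
  unfolding submod_def
  by unfold_locales (auto intro: add_assoc add_comm zr_add sm_distl sm_distr sm_sm sm_one sm_zero)

end



fun gprod :: "('g, 'm) monoid_scheme \<Rightarrow> ('g \<Rightarrow> 'k \<Rightarrow> 'g) \<Rightarrow> (nat \<Rightarrow> 'k) \<Rightarrow> (nat \<Rightarrow> 'g) \<Rightarrow> nat \<Rightarrow> 'g" where
  "gprod G pw c z 0 = \<one>\<^bsub>G\<^esub>"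
| "gprod G pw c z (Suc k) = gprod G pw c z k \<otimes>\<^bsub>G\<^esub> pw (z k) (c k)"

locale kg2 =
  fixes G :: "('g, 'm) monoid_scheme" (structure) and pw :: "'g \<Rightarrow> 'k::idom \<Rightarrow> 'g"
  assumes KG: "K_group2 G pw" and TF: "K_torsion_free G pw"
begin

lemma is_group: "group G" using KG unfolding K_group2_def nilpotent2_def by blast

sublocale group G by (rule is_group)

lemma comm_central: "x \<in> carrier G \<Longrightarrow> y \<in> carrier G \<Longrightarrow> z \<in> carrier G \<Longrightarrow>
  gcomm G x y \<otimes> z = z \<otimes> gcomm G x y"
  using KG unfolding K_group2_def nilpotent2_def by blast

lemma pw_closed[simp]: "x \<in> carrier G \<Longrightarrow> pw x a \<in> carrier G"
  using KG unfolding K_group2_def by blast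
lemma pw_1[simp]: "x \<in> carrier G \<Longrightarrow> pw x 1 = x"
  using KG unfolding K_group2_def by blast
lemma pw_add: "x \<in> carrier G \<Longrightarrow> pw x a \<otimes> pw x b = pw x (a + b)"
  using KG unfolding K_group2_def by blast
lemma pw_pw: "x \<in> carrier G \<Longrightarrow> pw (pw x a) b = pw x (a * b)"
  using KG unfolding K_group2_def by blast
lemma pw_conj: "x \<in> carrier G \<Longrightarrow> h \<in> carrier G \<Longrightarrow> inv h \<otimes> pw x a \<otimes> h = pw (inv h \<otimes> x \<otimes> h) a"
  using KG unfolding K_group2_def by blast
lemma pw_prod: "x \<in> carrier G \<Longrightarrow> y \<in> carrier G \<Longrightarrow>
   pw x a \<otimes> pw y a = pw (x \<otimes> y) a \<otimes> pw (gcomm G x y) (kbinom a 2)"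
  using KG unfolding K_group2_def by blast

lemma gcomm_closed[simp]: "x \<in> carrier G \<Longrightarrow> y \<in> carrier G \<Longrightarrow> gcomm G x y \<in> carrier G"
  unfolding gcomm_def by simp

lemma pw_0[simp]: "x \<in> carrier G \<Longrightarrow> pw x 0 = \<one>"
proof -
  assume x: "x \<in> carrier G"
  have "pw x 0 \<otimes> pw x 0 = pw x 0" using pw_add[OF x, of 0 0] by simp
  then show ?thesis using x by simp
qed

lemma pw_one_el[simp]: "pw \<one> a = \<one>"
proof -
  have "pw (pw \<one> 0) a = pw \<one> 0" using pw_pw[of \<one> 0 a] by simp
  then show ?thesis by simp
qed

lemma gcomm_comm: assumes x: "x \<in> carrier G" and y: "y \<in> carrier G" and xy: "x \<otimes> y = y \<otimes> x"
  shows "gcomm G x y = \<one>"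
proof -
  have "gcomm G x y = inv x \<otimes> inv y \<otimes> (x \<otimes> y)" unfolding gcomm_def using x y by (simp add: m_assoc)
  also have "\<dots> = inv x \<otimes> (inv y \<otimes> (y \<otimes> x))" using x y xy by (simp add: m_assoc)
  also have "inv y \<otimes> (y \<otimes> x) = x" using x y by (simp add: m_assoc[symmetric])
  finally show ?thesis using x by simp
qed

lemma pw_commute: "x \<in> carrier G \<Longrightarrow> y \<in> carrier G \<Longrightarrow> x \<otimes> y = y \<otimes> x \<Longrightarrow>
   pw (x \<otimes> y) a = pw x a \<otimes> pw y a"
  using pw_prod[of x y a] gcomm_comm by simp

lemma pw_neg1: "x \<in> carrier G \<Longrightarrow> pw x (-1) = inv x"
proof -
  assume x: "x \<in> carrier G"
  have "pw x (-1) \<otimes> x = \<one>" using pw_add[OF x, of "-1" 1] x by simp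
  then show ?thesis using x by (simp add: inv_equality)
qed

lemma gcomm_conj: assumes c: "c \<in> carrier G" and h: "h \<in> carrier G"
  shows "inv h \<otimes> c \<otimes> h = c \<otimes> gcomm G c h"
proof -
  have X: "inv h \<otimes> c \<otimes> h \<in> carrier G" using c h by simp
  have "c \<otimes> gcomm G c h = c \<otimes> (inv c \<otimes> (inv h \<otimes> c \<otimes> h))" unfolding gcomm_def using c h by (simp add: m_assoc)
  also have "\<dots> = (c \<otimes> inv c) \<otimes> (inv h \<otimes> c \<otimes> h)" using c X by (simp only: m_assoc inv_closed)
  finally show ?thesis using c h X by simp
qed

abbreviation "Zc \<equiv> center_of G (carrier G)"

lemma L1: assumes c: "c \<in> carrier G" and b: "b \<noteq> 0" and cb: "pw c b \<in> Zc" shows "c \<in> Zc"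
  unfolding center_of_def
proof (intro CollectI conjI ballI)
  show "c \<in> carrier G" using c .
  fix h assume h: "h \<in> carrier G"
  have "inv h \<otimes> pw c b \<otimes> h = pw c b"
  proof -
    have "pw c b \<otimes> h = h \<otimes> pw c b" using cb h unfolding center_of_def by blast
    then have "inv h \<otimes> pw c b \<otimes> h = inv h \<otimes> (h \<otimes> pw c b)" using h c by (simp add: m_assoc)
    also have "\<dots> = pw c b" using h c by (simp add: m_assoc[symmetric])
    finally show ?thesis .
  qed
  also have "inv h \<otimes> pw c b \<otimes> h = pw (c \<otimes> gcomm G c h) b" using pw_conj c h gcomm_conj by simp
  also have "\<dots> = pw c b \<otimes> pw (gcomm G c h) b"
  proof -
    have "c \<otimes> gcomm G c h = gcomm G c h \<otimes> c" using comm_central[OF c h c] by simp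
    then show ?thesis using pw_commute[OF c gcomm_closed[OF c h]] by blast
  qed
  finally have "pw (gcomm G c h) b = \<one>" using c h by simp
  then have "gcomm G c h = \<one>" using TF b c h unfolding K_torsion_free_def by simp
  then have "inv h \<otimes> c \<otimes> h = c" using gcomm_conj c h by simp
  then have "h \<otimes> (inv h \<otimes> c \<otimes> h) = h \<otimes> c" by simp
  then show "c \<otimes> h = h \<otimes> c" using c h by (simp add: m_assoc[symmetric])
qed

lemma conj_fix: assumes a: "a \<in> carrier G" and h: "h \<in> carrier G"
  shows "inv h \<otimes> a \<otimes> h = a \<longleftrightarrow> a \<otimes> h = h \<otimes> a"
proof
  assume "inv h \<otimes> a \<otimes> h = a"
  then have "h \<otimes> (inv h \<otimes> a \<otimes> h) = h \<otimes> a" by simp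
  then show "a \<otimes> h = h \<otimes> a" using a h by (simp add: m_assoc[symmetric])
next
  assume "a \<otimes> h = h \<otimes> a"
  then have "inv h \<otimes> (a \<otimes> h) = inv h \<otimes> (h \<otimes> a)" by simp
  then show "inv h \<otimes> a \<otimes> h = a" using a h by (simp add: m_assoc[symmetric])
qed

lemma Zc_sub: "Zc \<subseteq> carrier G" unfolding center_of_def by blast

lemma Zc_K: "K_subgroup G pw Zc"
  unfolding K_subgroup_def
proof (intro conjI ballI allI)
  show "subgroup Zc G"
  proof (rule subgroup.intro)
    show "Zc \<subseteq> carrier G" by (rule Zc_sub)
    show "\<one> \<in> Zc" unfolding center_of_def by simp
    fix x y assume x: "x \<in> Zc" and y: "y \<in> Zc"
    show "x \<otimes> y \<in> Zc" unfolding center_of_def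
    proof (intro CollectI conjI ballI)
      show "x \<otimes> y \<in> carrier G" using x y Zc_sub by blast
      fix h assume h: "h \<in> carrier G"
      have xc: "x \<in> carrier G" "y \<in> carrier G" using x y Zc_sub by blast+
      have "x \<otimes> y \<otimes> h = x \<otimes> (h \<otimes> y)" using y h xc unfolding center_of_def by (simp add: m_assoc)
      also have "\<dots> = (x \<otimes> h) \<otimes> y" using xc h by (simp add: m_assoc)
      also have "\<dots> = h \<otimes> (x \<otimes> y)" using x h xc unfolding center_of_def by (simp add: m_assoc)
      finally show "x \<otimes> y \<otimes> h = h \<otimes> (x \<otimes> y)" .
    qed
  next
    fix x assume x: "x \<in> Zc"
    have xc: "x \<in> carrier G" using x Zc_sub by blast
    show "inv x \<in> Zc" unfolding center_of_def
    proof (intro CollectI conjI ballI)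
      show "inv x \<in> carrier G" using xc by simp
      fix h assume h: "h \<in> carrier G"
      have "x \<otimes> inv h = inv h \<otimes> x" using x h unfolding center_of_def by simp
      then have "inv (x \<otimes> inv h) = inv (inv h \<otimes> x)" by simp
      then show "inv x \<otimes> h = h \<otimes> inv x" using xc h by (simp add: inv_mult_group)
    qed
  qed
next
  fix x a assume x: "x \<in> Zc"
  have xc: "x \<in> carrier G" using x Zc_sub by blast
  show "pw x a \<in> Zc" unfolding center_of_def
  proof (intro CollectI conjI ballI)
    show "pw x a \<in> carrier G" using xc by simp
    fix h assume h: "h \<in> carrier G"
    have "inv h \<otimes> x \<otimes> h = x" using conj_fix[OF xc h] x h unfolding center_of_def by blast
    then have "inv h \<otimes> pw x a \<otimes> h = pw x a" using pw_conj[OF xc h] by simp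
    then show "pw x a \<otimes> h = h \<otimes> pw x a" using conj_fix[OF _ h] xc by simp
  qed
qed

lemma Kgen_K: assumes "S \<subseteq> carrier G" shows "K_subgroup G pw (K_gen G pw S)"
proof -
  let ?F = "{H. K_subgroup G pw H \<and> S \<subseteq> H}"
  have cF: "carrier G \<in> ?F" using assms subgroup_self unfolding K_subgroup_def by auto
  show ?thesis unfolding K_gen_def K_subgroup_def[of G pw "\<Inter>?F"]
  proof (intro conjI ballI allI)
    show "subgroup (\<Inter>?F) G"
    proof (rule subgroup.intro)
      show "\<Inter>?F \<subseteq> carrier G" using cF by blast
      show "\<one> \<in> \<Inter>?F"
      proof (rule InterI)
        fix H assume "H \<in> ?F" then show "\<one> \<in> H" unfolding K_subgroup_def using subgroup.one_closed by auto
      qed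
      fix x y assume x: "x \<in> \<Inter>?F" and y: "y \<in> \<Inter>?F"
      show "x \<otimes> y \<in> \<Inter>?F"
      proof (rule InterI)
        fix H assume H: "H \<in> ?F" then have "x \<in> H" "y \<in> H" using x y by blast+
        then show "x \<otimes> y \<in> H" using H unfolding K_subgroup_def using subgroup.m_closed by auto
      qed
    next
      fix x assume x: "x \<in> \<Inter>?F"
      show "inv x \<in> \<Inter>?F"
      proof (rule InterI)
        fix H assume H: "H \<in> ?F" then have "x \<in> H" using x by blast
        then show "inv x \<in> H" using H unfolding K_subgroup_def using subgroup.m_inv_closed by auto
      qed
    qed
    fix x a assume x: "x \<in> \<Inter>?F"
    show "pw x a \<in> \<Inter>?F"
    proof (rule InterI)
      fix H assume H: "H \<in> ?F" then have "x \<in> H" using x by blast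
      then show "pw x a \<in> H" using H unfolding K_subgroup_def by auto
    qed
  qed
qed

lemma Kgen_least: "K_subgroup G pw H \<Longrightarrow> S \<subseteq> H \<Longrightarrow> K_gen G pw S \<subseteq> H"
  unfolding K_gen_def by blast

lemma Kgen_incl: "S \<subseteq> K_gen G pw S"
  unfolding K_gen_def by blast

abbreviation "Gd \<equiv> derived G pw (carrier G)"

lemma Gd_Zc: "Gd \<subseteq> Zc"
  unfolding derived_def
proof (rule Kgen_least[OF Zc_K])
  show "{gcomm G x y |x y. x \<in> carrier G \<and> y \<in> carrier G} \<subseteq> Zc"
    unfolding center_of_def using comm_central by auto
qed

lemma Gd_K: "K_subgroup G pw Gd"
  unfolding derived_def by (rule Kgen_K) auto

abbreviation "NN \<equiv> isolator G pw (carrier G) Gd"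

lemma NN_Zc: "NN \<subseteq> Zc"
proof
  fix x assume "x \<in> NN"
  then obtain a where "x \<in> carrier G" "a \<noteq> 0" "pw x a \<in> Gd" unfolding isolator_def by blast
  then show "x \<in> Zc" using L1 Gd_Zc by blast
qed

lemma Zc_comm: "x \<in> Zc \<Longrightarrow> y \<in> carrier G \<Longrightarrow> x \<otimes> y = y \<otimes> x"
  unfolding center_of_def by blast

lemma NN_K: "K_subgroup G pw NN"
  unfolding K_subgroup_def
proof (intro conjI ballI allI)
  have Gs: "subgroup Gd G" using Gd_K unfolding K_subgroup_def by blast
  have GdP: "\<And>x a. x \<in> Gd \<Longrightarrow> pw x a \<in> Gd" using Gd_K unfolding K_subgroup_def by blast
  show "subgroup NN G"
  proof (rule subgroup.intro)
    show "NN \<subseteq> carrier G" unfolding isolator_def by blast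
    show "\<one> \<in> NN" unfolding isolator_def using subgroup.one_closed[OF Gs] by (auto intro!: exI[of _ 1])
    fix x y assume x: "x \<in> NN" and y: "y \<in> NN"
    obtain a b where ab: "a \<noteq> 0" "pw x a \<in> Gd" "b \<noteq> 0" "pw y b \<in> Gd" "x \<in> carrier G" "y \<in> carrier G"
      using x y unfolding isolator_def by blast
    have xz: "x \<in> Zc" using x NN_Zc by blast
    have "pw (x \<otimes> y) (a * b) = pw x (a*b) \<otimes> pw y (a*b)" using pw_commute[OF ab(5,6) Zc_comm[OF xz ab(6)]] by simp
    also have "\<dots> = pw (pw x a) b \<otimes> pw (pw y b) a" using pw_pw ab by (simp add: mult.commute)
    finally have "pw (x \<otimes> y) (a * b) \<in> Gd" using GdP ab subgroup.m_closed[OF Gs] by simp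
    then show "x \<otimes> y \<in> NN" unfolding isolator_def using ab by (auto intro!: exI[of _ "a*b"])
  next
    fix x assume x: "x \<in> NN"
    obtain a where a: "a \<noteq> 0" "pw x a \<in> Gd" "x \<in> carrier G" using x unfolding isolator_def by blast
    have "pw (inv x) a = pw (pw x a) (-1)" using pw_neg1 pw_pw a by (metis mult.commute)
    also have "\<dots> = inv (pw x a)" using pw_neg1 a by simp
    finally have "pw (inv x) a \<in> Gd" using subgroup.m_inv_closed[OF Gs] a by simp
    then show "inv x \<in> NN" unfolding isolator_def using a by (auto intro!: exI[of _ a])
  qed
next
  fix x c assume x: "x \<in> NN"
  obtain a where a: "a \<noteq> 0" "pw x a \<in> Gd" "x \<in> carrier G" using x unfolding isolator_def by blast
  have "pw (pw x c) a = pw (pw x a) c" using pw_pw a by (simp add: mult.commute)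
  then have "pw (pw x c) a \<in> Gd" using Gd_K a unfolding K_subgroup_def by simp
  then show "pw x c \<in> NN" unfolding isolator_def using a by (auto intro!: exI[of _ a])
qed

lemma I_NN: "I_of G pw = NN"
  unfolding I_of_def using NN_Zc by blast

lemma NN_normal: "normal NN G"
proof (rule normal_invI)
  show "subgroup NN G" using NN_K unfolding K_subgroup_def by blast
  fix x h assume x: "x \<in> carrier G" and h: "h \<in> NN"
  have hz: "h \<in> Zc" using h NN_Zc by blast
  then have hc: "h \<in> carrier G" using Zc_sub by blast
  have "x \<otimes> h \<otimes> inv x = h \<otimes> x \<otimes> inv x" using Zc_comm[OF hz x] by simp
  also have "\<dots> = h" using x hc by (simp add: m_assoc)
  finally show "x \<otimes> h \<otimes> inv x \<in> NN" using h by simp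
qed

lemma NN_sub: "NN \<subseteq> carrier G" unfolding isolator_def by blast
lemma NN_sg: "subgroup NN G" using NN_K unfolding K_subgroup_def by blast

lemma rc_eq: assumes x: "x \<in> carrier G" and y: "y \<in> carrier G"
  shows "NN #> x = NN #> y \<longleftrightarrow> (\<exists>n\<in>NN. y = n \<otimes> x)"
proof
  assume "NN #> x = NN #> y"
  then have "y \<in> NN #> x" using rcos_self[OF y NN_sg] by simp
  then show "\<exists>n\<in>NN. y = n \<otimes> x" unfolding r_coset_def by blast
next
  assume "\<exists>n\<in>NN. y = n \<otimes> x"
  then have "y \<in> NN #> x" unfolding r_coset_def by blast
  then show "NN #> x = NN #> y" using repr_independence[OF _ x NN_sg] by blast
qed

definition QA :: "'g set set" where "QA = {NN #> x | x. x \<in> carrier G}"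
definition qadd :: "'g set \<Rightarrow> 'g set \<Rightarrow> 'g set" where "qadd C D = C <#> D"
definition qsm :: "'k \<Rightarrow> 'g set \<Rightarrow> 'g set" where
  "qsm a C = NN #> pw (SOME x. x \<in> carrier G \<and> C = NN #> x) a"

lemma qadd_eq: "x \<in> carrier G \<Longrightarrow> y \<in> carrier G \<Longrightarrow> qadd (NN #> x) (NN #> y) = NN #> (x \<otimes> y)"
  unfolding qadd_def using normal.rcos_sum[OF NN_normal] by blast

lemma NN_one: "NN #> \<one> = NN" using coset_mult_one NN_sub by blast

lemma pw_mod: assumes x: "x \<in> carrier G" and n: "n \<in> NN"
  shows "NN #> pw (n \<otimes> x) a = NN #> pw x a"
proof -
  have nz: "n \<in> Zc" using n NN_Zc by blast
  have nc: "n \<in> carrier G" using n NN_sub by blast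
  have "pw (n \<otimes> x) a = pw n a \<otimes> pw x a" using pw_commute[OF nc x Zc_comm[OF nz x]] .
  moreover have "pw n a \<in> NN" using NN_K n unfolding K_subgroup_def by blast
  ultimately have "NN #> pw x a = NN #> pw (n \<otimes> x) a" using rc_eq[of "pw x a" "pw (n \<otimes> x) a"] x nc by auto
  then show ?thesis by simp
qed

lemma qsm_eq: assumes x: "x \<in> carrier G" shows "qsm a (NN #> x) = NN #> pw x a"
proof -
  let ?y = "SOME y. y \<in> carrier G \<and> NN #> x = NN #> y"
  have "\<exists>y. y \<in> carrier G \<and> NN #> x = NN #> y" using x by blast
  then have y: "?y \<in> carrier G" "NN #> x = NN #> ?y" by (metis (mono_tags, lifting) someI_ex)+
  then obtain n where n: "n \<in> NN" "?y = n \<otimes> x" using rc_eq x by blast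
  have "qsm a (NN #> x) = NN #> pw ?y a" unfolding qsm_def by simp
  also have "\<dots> = NN #> pw x a" using n pw_mod x by simp
  finally show ?thesis .
qed

lemma lc1: "a \<in> carrier G \<Longrightarrow> w \<in> carrier G \<Longrightarrow> a \<otimes> (inv a \<otimes> w) = w"
  by (simp add: m_assoc[symmetric])
lemma comm_swap: assumes x: "x \<in> carrier G" and y: "y \<in> carrier G"
  shows "x \<otimes> y = gcomm G x y \<otimes> (y \<otimes> x)"
proof -
  have "(y \<otimes> x) \<otimes> gcomm G x y = y \<otimes> (x \<otimes> (inv x \<otimes> (inv y \<otimes> (x \<otimes> y))))"
    unfolding gcomm_def using x y by (simp add: m_assoc)
  also have "\<dots> = x \<otimes> y" using x y by (simp add: lc1)
  finally show ?thesis using comm_central[OF x y, of "y \<otimes> x"] x y by simp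
qed
lemma comm_NN: "x \<in> carrier G \<Longrightarrow> y \<in> carrier G \<Longrightarrow> gcomm G x y \<in> NN"
proof -
  assume x: "x \<in> carrier G" and y: "y \<in> carrier G"
  have "gcomm G x y \<in> {gcomm G x y |x y. x \<in> carrier G \<and> y \<in> carrier G}" using x y by blast
  then have "gcomm G x y \<in> Gd" unfolding derived_def using Kgen_incl by (rule subsetD[rotated])
  then have "pw (gcomm G x y) 1 \<in> Gd" using x y by simp
  moreover have "(1::'k) \<noteq> 0" by simp
  moreover have "gcomm G x y \<in> carrier G" using x y by simp
  ultimately show ?thesis unfolding isolator_def by blast
qed
lemma rc_comm: assumes x: "x \<in> carrier G" and y: "y \<in> carrier G"
  shows "NN #> (y \<otimes> x) = NN #> (x \<otimes> y)"
proof -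
  have "\<exists>n\<in>NN. x \<otimes> y = n \<otimes> (y \<otimes> x)" using comm_swap[OF x y] comm_NN[OF x y] by blast
  moreover have "y \<otimes> x \<in> carrier G" "x \<otimes> y \<in> carrier G" using x y by simp_all
  ultimately show ?thesis using rc_eq[of "y \<otimes> x" "x \<otimes> y"] by blast
qed
lemma rc_pw_prod: assumes x: "x \<in> carrier G" and y: "y \<in> carrier G"
  shows "NN #> pw (x \<otimes> y) a = NN #> (pw x a \<otimes> pw y a)"
proof -
  let ?c = "pw (gcomm G x y) (kbinom a 2)"
  have c: "?c \<in> NN" using comm_NN[OF x y] NN_K unfolding K_subgroup_def by blast
  have cz: "?c \<in> Zc" using c NN_Zc by blast
  have "pw x a \<otimes> pw y a = pw (x \<otimes> y) a \<otimes> ?c" by (rule pw_prod[OF x y])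
  also have "\<dots> = ?c \<otimes> pw (x \<otimes> y) a" using Zc_comm[OF cz, of "pw (x \<otimes> y) a"] x y by simp
  finally have "\<exists>n\<in>NN. pw x a \<otimes> pw y a = n \<otimes> pw (x \<otimes> y) a" using c by blast
  moreover have "pw (x \<otimes> y) a \<in> carrier G" "pw x a \<otimes> pw y a \<in> carrier G" using x y by simp_all
  ultimately show ?thesis using rc_eq[of "pw (x \<otimes> y) a" "pw x a \<otimes> pw y a"] by blast
qed

lemma QA_kmod: "kmod QA qadd NN qsm"
proof
  fix C D E a b assume C: "C \<in> QA"
  then obtain x where x: "x \<in> carrier G" "C = NN #> x" unfolding QA_def by blast
  show "qsm a C \<in> QA" using x qsm_eq unfolding QA_def by auto
  show "qadd NN C = C" using x qadd_eq[of \<one> x] NN_one by simp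
  show "qsm (a + b) C = qadd (qsm a C) (qsm b C)" using x qsm_eq qadd_eq pw_add by simp
  show "qsm a (qsm b C) = qsm (a * b) C" using x qsm_eq pw_pw by (simp add: mult.commute)
  show "qsm 1 C = C" using x qsm_eq by simp
  show "qsm 0 C = NN" using x qsm_eq NN_one by simp
  assume D: "D \<in> QA"
  then obtain y where y: "y \<in> carrier G" "D = NN #> y" unfolding QA_def by blast
  show "qadd C D \<in> QA" using x y qadd_eq unfolding QA_def by auto
  show "qadd C D = qadd D C" using x y qadd_eq rc_comm by simp
  show "qsm a (qadd C D) = qadd (qsm a C) (qsm a D)" using x y qadd_eq qsm_eq rc_pw_prod by simp
  assume E: "E \<in> QA"
  then obtain z where z: "z \<in> carrier G" "E = NN #> z" unfolding QA_def by blast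
  show "qadd (qadd C D) E = qadd C (qadd D E)" using x y z qadd_eq by (simp add: m_assoc)
next
  show "NN \<in> QA" unfolding QA_def using NN_one by force
qed

end


context kg2 begin

lemma gp_carrier: "\<forall>i<k. z i \<in> carrier G \<Longrightarrow> gprod G pw c z k \<in> carrier G"
  by (induction k) auto

lemma gp_Zc: "\<forall>i<k. z i \<in> Zc \<Longrightarrow> gprod G pw c z k \<in> Zc"
proof (induction k)
  case 0 then show ?case using Zc_K unfolding K_subgroup_def using subgroup.one_closed by fastforce
next
  case (Suc k)
  have "pw (z k) (c k) \<in> Zc" using Suc.prems Zc_K unfolding K_subgroup_def by blast
  then show ?case using Suc Zc_K unfolding K_subgroup_def using subgroup.m_closed by fastforce
qed

lemma gp_coset: "\<forall>i<k. z i \<in> carrier G \<Longrightarrow> NN #> gprod G pw c z k = lc qadd NN qsm c (\<lambda>i. NN #> z i) k"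
proof (induction k)
  case 0 then show ?case using NN_one by simp
next
  case (Suc k)
  have zk: "z k \<in> carrier G" using Suc.prems by simp
  have "NN #> gprod G pw c z (Suc k) = qadd (NN #> gprod G pw c z k) (NN #> pw (z k) (c k))"
    using qadd_eq gp_carrier Suc.prems zk by simp
  then show ?case using Suc qsm_eq[OF zk] by simp
qed

lemma gp_zero: "\<forall>i<k. c i = 0 \<Longrightarrow> \<forall>i<k. z i \<in> carrier G \<Longrightarrow> gprod G pw c z k = \<one>"
  by (induction k) auto

lemma gp_mult: "\<forall>i<k. z i \<in> Zc \<Longrightarrow>
  gprod G pw c z k \<otimes> gprod G pw d z k = gprod G pw (\<lambda>i. c i + d i) z k"
proof (induction k)
  case 0 then show ?case by simp
next
  case (Suc k)
  let ?P = "gprod G pw c z k" and ?Q = "gprod G pw d z k"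
  have zc: "\<forall>i<k. z i \<in> carrier G" using Suc.prems Zc_sub by auto
  have zk: "z k \<in> Zc" using Suc.prems by simp
  then have zkc: "z k \<in> carrier G" using Zc_sub by blast
  have pz: "pw (z k) (c k) \<in> Zc" using zk Zc_K unfolding K_subgroup_def by blast
  have P: "?P \<in> carrier G" "?Q \<in> carrier G" using gp_carrier zc by blast+
  have "gprod G pw c z (Suc k) \<otimes> gprod G pw d z (Suc k) = ?P \<otimes> (pw (z k) (c k) \<otimes> ?Q) \<otimes> pw (z k) (d k)"
    using P zkc by (simp add: m_assoc)
  also have "pw (z k) (c k) \<otimes> ?Q = ?Q \<otimes> pw (z k) (c k)" using Zc_comm[OF pz P(2)] .
  also have "?P \<otimes> (?Q \<otimes> pw (z k) (c k)) \<otimes> pw (z k) (d k) = (?P \<otimes> ?Q) \<otimes> (pw (z k) (c k) \<otimes> pw (z k) (d k))"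
    using P zkc by (simp add: m_assoc)
  also have "\<dots> = gprod G pw (\<lambda>i. c i + d i) z (Suc k)"
    using Suc.IH Suc.prems pw_add[OF zkc] by simp
  finally show ?case .
qed

lemma gp_inv: assumes "\<forall>i<k. z i \<in> Zc"
  shows "inv (gprod G pw c z k) = gprod G pw (\<lambda>i. - c i) z k"
proof -
  have zc: "\<forall>i<k. z i \<in> carrier G" using assms Zc_sub by auto
  have "gprod G pw (\<lambda>i. - c i) z k \<otimes> gprod G pw c z k = gprod G pw (\<lambda>i. - c i + c i) z k"
    using gp_mult[OF assms] .
  also have "\<dots> = \<one>" using gp_zero zc by simp
  finally show ?thesis using inv_equality gp_carrier zc by blast
qed

lemma gp_pw: "\<forall>i<k. z i \<in> Zc \<Longrightarrow> pw (gprod G pw c z k) a = gprod G pw (\<lambda>i. a * c i) z k"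
proof (induction k)
  case 0 then show ?case by simp
next
  case (Suc k)
  have zc: "\<forall>i<k. z i \<in> carrier G" using Suc.prems Zc_sub by auto
  have zk: "z k \<in> Zc" using Suc.prems by simp
  then have zkc: "z k \<in> carrier G" using Zc_sub by blast
  have pz: "pw (z k) (c k) \<in> Zc" using zk Zc_K unfolding K_subgroup_def by blast
  have P: "gprod G pw c z k \<in> carrier G" using gp_carrier zc by blast
  have "pw (gprod G pw c z (Suc k)) a = pw (gprod G pw c z k) a \<otimes> pw (pw (z k) (c k)) a"
    using pw_commute[OF P pw_closed[OF zkc] Zc_comm[OF pz P, symmetric]] by simp
  then show ?case using Suc pw_pw[OF zkc] by (simp add: mult.commute)
qed

lemma gcomm_alt: "x \<in> carrier G \<Longrightarrow> y \<in> carrier G \<Longrightarrow> gcomm G x y = inv (y \<otimes> x) \<otimes> (x \<otimes> y)"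
  unfolding gcomm_def by (simp add: inv_mult_group m_assoc)

lemma gcomm_Zl: assumes a: "a \<in> carrier G" and b: "b \<in> carrier G" and g: "g \<in> Zc"
  shows "gcomm G (a \<otimes> g) b = gcomm G a b"
proof -
  have gc: "g \<in> carrier G" using g Zc_sub by blast
  have "b \<otimes> (a \<otimes> g) = (b \<otimes> a) \<otimes> g" using a b gc by (simp add: m_assoc)
  moreover have "(a \<otimes> g) \<otimes> b = (a \<otimes> b) \<otimes> g" using a b gc Zc_comm[OF g b] by (simp add: m_assoc)
  ultimately have "gcomm G (a \<otimes> g) b = inv ((b \<otimes> a) \<otimes> g) \<otimes> ((a \<otimes> b) \<otimes> g)"
    using gcomm_alt[of "a \<otimes> g" b] a b gc by simp
  also have "\<dots> = inv g \<otimes> (inv (b \<otimes> a) \<otimes> (a \<otimes> b)) \<otimes> g"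
    using a b gc by (simp add: inv_mult_group m_assoc)
  also have "\<dots> = gcomm G a b" using gcomm_alt a b conj_fix gc Zc_comm[OF g, of "gcomm G a b"]
    by (metis gcomm_closed)
  finally show ?thesis .
qed

lemma gcomm_Zr: assumes a: "a \<in> carrier G" and b: "b \<in> carrier G" and g: "g \<in> Zc"
  shows "gcomm G a (b \<otimes> g) = gcomm G a b"
proof -
  have gc: "g \<in> carrier G" using g Zc_sub by blast
  have "(b \<otimes> g) \<otimes> a = (b \<otimes> a) \<otimes> g" using a b gc Zc_comm[OF g a] by (simp add: m_assoc)
  moreover have "a \<otimes> (b \<otimes> g) = (a \<otimes> b) \<otimes> g" using a b gc by (simp add: m_assoc)
  ultimately have "gcomm G a (b \<otimes> g) = inv ((b \<otimes> a) \<otimes> g) \<otimes> ((a \<otimes> b) \<otimes> g)"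
    using gcomm_alt[of a "b \<otimes> g"] a b gc by simp
  also have "\<dots> = inv g \<otimes> (inv (b \<otimes> a) \<otimes> (a \<otimes> b)) \<otimes> g"
    using a b gc by (simp add: inv_mult_group m_assoc)
  also have "\<dots> = gcomm G a b" using gcomm_alt a b conj_fix gc Zc_comm[OF g, of "gcomm G a b"]
    by (metis gcomm_closed)
  finally show ?thesis .
qed

lemma Zc_sg: "subgroup Zc G" using Zc_K unfolding K_subgroup_def by blast
lemma Zc_one: "\<one> \<in> Zc" by (rule subgroup.one_closed[OF Zc_sg])
lemma Zc_mult: "x \<in> Zc \<Longrightarrow> y \<in> Zc \<Longrightarrow> x \<otimes> y \<in> Zc" by (rule subgroup.m_closed[OF Zc_sg])
lemma Zc_inv: "x \<in> Zc \<Longrightarrow> inv x \<in> Zc" by (rule subgroup.m_inv_closed[OF Zc_sg])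
lemma Zc_pw: "x \<in> Zc \<Longrightarrow> pw x a \<in> Zc" using Zc_K unfolding K_subgroup_def by blast

definition Zbar :: "'g set set" where "Zbar = {NN #> z | z. z \<in> Zc}"

lemma NN_in_rc: "x \<in> carrier G \<Longrightarrow> NN #> x = NN \<longleftrightarrow> x \<in> NN"
proof
  assume x: "x \<in> carrier G" and "NN #> x = NN"
  then show "x \<in> NN" using rcos_self[OF x NN_sg] by simp
next
  assume x: "x \<in> carrier G" and "x \<in> NN"
  then show "NN #> x = NN" using coset_join2[OF x NN_sg] by simp
qed

lemma NN_pure_el: assumes x: "x \<in> carrier G" and a: "a \<noteq> 0" and xa: "pw x a \<in> NN" shows "x \<in> NN"
proof -
  obtain b where b: "b \<noteq> 0" "pw (pw x a) b \<in> Gd" using xa unfolding isolator_def by blast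
  then have "pw x (a * b) \<in> Gd" using pw_pw x by simp
  moreover have "a * b \<noteq> 0" using a b by simp
  ultimately show ?thesis unfolding isolator_def using x by blast
qed

lemma regular_main:
  assumes pid: "principal_ideal_domain TYPE('k)" and fg: "K_finitely_generated G pw"
  shows "K_regular G pw"
proof -
  interpret M: kmod QA qadd NN qsm by (rule QA_kmod)
  have QAc: "\<And>C. C \<in> QA \<Longrightarrow> \<exists>x. x \<in> carrier G \<and> C = NN #> x" unfolding QA_def by blast
  have rcQA: "\<And>x. x \<in> carrier G \<Longrightarrow> NN #> x \<in> QA" unfolding QA_def by blast
  have NNQA: "NN \<in> QA" using M.zr_closed .
  have sub0: "M.submod {NN}" unfolding M.submod_def using NNQA M.zr_add M.sm_zr by auto
  have pure0: "M.pure {NN}" unfolding M.pure_def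
  proof (intro ballI allI impI)
    fix C a assume C: "C \<in> QA" and a: "a \<noteq> 0" and Ca: "qsm a C \<in> {NN}"
    obtain x where x: "x \<in> carrier G" "C = NN #> x" using QAc[OF C] by blast
    have "NN #> pw x a = NN" using Ca x qsm_eq by simp
    then have "pw x a \<in> NN" using NN_in_rc x by simp
    then have "x \<in> NN" using NN_pure_el x a by blast
    then show "C \<in> {NN}" using NN_in_rc x by simp
  qed
  have ZbQA: "Zbar \<subseteq> QA" unfolding Zbar_def QA_def using Zc_sub by blast
  have subZ: "M.submod Zbar" unfolding M.submod_def
  proof (intro conjI ballI allI)
    show "Zbar \<subseteq> QA" by (rule ZbQA)
    have "NN #> \<one> \<in> Zbar" unfolding Zbar_def using Zc_one by blast
    then show "NN \<in> Zbar" using NN_one by simp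
    fix C D a assume C: "C \<in> Zbar"
    then obtain x where x: "x \<in> Zc" "C = NN #> x" unfolding Zbar_def by blast
    have xc: "x \<in> carrier G" using x Zc_sub by blast
    have "qsm a C = NN #> pw x a" using x(2) xc qsm_eq by simp
    moreover have "pw x a \<in> Zc" using x(1) Zc_pw by blast
    ultimately show "qsm a C \<in> Zbar" unfolding Zbar_def by blast
    assume D: "D \<in> Zbar"
    then obtain y where y: "y \<in> Zc" "D = NN #> y" unfolding Zbar_def by blast
    have yc: "y \<in> carrier G" using y Zc_sub by blast
    have "x \<otimes> y \<in> Zc" using x(1) y(1) Zc_mult by blast
    moreover have "qadd C D = NN #> (x \<otimes> y)" using x(2) y(2) xc yc qadd_eq by simp
    ultimately show "qadd C D \<in> Zbar" unfolding Zbar_def by blast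
  qed
  have pureZ: "M.pure Zbar" unfolding M.pure_def
  proof (intro ballI allI impI)
    fix C a assume C: "C \<in> QA" and a: "a \<noteq> 0" and Ca: "qsm a C \<in> Zbar"
    obtain x where x: "x \<in> carrier G" "C = NN #> x" using QAc[OF C] by blast
    obtain z where z: "z \<in> Zc" "NN #> pw x a = NN #> z" using Ca x qsm_eq unfolding Zbar_def by auto
    have zc: "z \<in> carrier G" using z Zc_sub by blast
    obtain n where n: "n \<in> NN" "z = n \<otimes> pw x a" using rc_eq[of "pw x a" z] z zc x by auto
    have nz: "n \<in> Zc" using n NN_Zc by blast
    have nc: "n \<in> carrier G" using nz Zc_sub by blast
    have "pw x a = inv n \<otimes> z" using n nc x by (simp add: m_assoc[symmetric])
    moreover have "inv n \<in> Zc" using nz Zc_inv by blast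
    ultimately have "pw x a \<in> Zc" using z(1) Zc_mult by simp
    then have "x \<in> Zc" using L1 x a by blast
    then show "C \<in> Zbar" unfolding Zbar_def using x by blast
  qed
  have "\<exists>S. finite S \<and> S \<subseteq> carrier G \<and> K_gen G pw S = carrier G" using fg unfolding K_finitely_generated_def .
  then obtain S where S: "finite S" "S \<subseteq> carrier G" "K_gen G pw S = carrier G" by (elim exE conjE) (rule that)
  obtain m :: nat and g :: "nat \<Rightarrow> 'g" where mg: "S = g ` {i. i < m}"
    using finite_imp_nat_seg_image_inj_on[OF S(1)] by (elim exE conjE) (rule that)
  have gc: "\<forall>i<m. g i \<in> carrier G"
  proof (intro allI impI)
    fix i assume "i < m" then have "g i \<in> S" using mg by simp
    then show "g i \<in> carrier G" using S(2) by (rule subsetD[rotated])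
  qed
  let ?gq = "\<lambda>i::nat. NN #> g i"
  have gqA: "\<forall>i<m. ?gq i \<in> QA" using gc rcQA by simp
  have spg: "M.submod (M.spanset ?gq m)" by (rule M.spanset_submod[OF gqA])
  define T where "T = {x \<in> carrier G. NN #> x \<in> M.spanset ?gq m}"
  have "K_subgroup G pw T" unfolding K_subgroup_def
  proof (intro conjI ballI allI)
    show "subgroup T G"
    proof (rule subgroup.intro)
      show "T \<subseteq> carrier G" unfolding T_def by blast
      show "\<one> \<in> T" unfolding T_def using NN_one spg unfolding M.submod_def by simp
      fix x y assume "x \<in> T" "y \<in> T"
      then show "x \<otimes> y \<in> T" unfolding T_def using qadd_eq spg unfolding M.submod_def by (metis (mono_tags, lifting) m_closed mem_Collect_eq)
    next
      fix x assume x: "x \<in> T"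
      then have "qsm (-1) (NN #> x) \<in> M.spanset ?gq m" unfolding T_def using spg unfolding M.submod_def by blast
      then show "inv x \<in> T" unfolding T_def using x qsm_eq pw_neg1 unfolding T_def by auto
    qed
  next
    fix x a assume x: "x \<in> T"
    then have "qsm a (NN #> x) \<in> M.spanset ?gq m" unfolding T_def using spg unfolding M.submod_def by blast
    then show "pw x a \<in> T" using x qsm_eq unfolding T_def by auto
  qed
  moreover have "S \<subseteq> T"
  proof
    fix s assume "s \<in> S"
    then obtain i where i: "i < m" "s = g i" using mg by blast
    have "NN #> g i = lc qadd NN qsm (\<lambda>j. if j = i then 1 else 0) ?gq m"
    proof -
      have "\<And>k. k \<le> m \<Longrightarrow> lc qadd NN qsm (\<lambda>j. if j = i then 1 else 0) ?gq k = (if i < k then NN #> g i else NN)"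
      proof -
        fix k show "k \<le> m \<Longrightarrow> lc qadd NN qsm (\<lambda>j. if j = i then 1 else 0) ?gq k = (if i < k then NN #> g i else NN)"
        proof (induction k)
          case 0 then show ?case by simp
        next
          case (Suc k)
          have gk: "NN #> g k \<in> QA" using gqA Suc.prems by simp
          have gi: "NN #> g i \<in> QA" using gqA i by simp
          show ?case using Suc gk gi M.sm_zero M.sm_one M.add_zr M.zr_add M.zr_closed less_Suc_eq by auto
        qed
      qed
      then show ?thesis using i by simp
    qed
    then show "s \<in> T" unfolding T_def M.spanset_def using i gc by auto
  qed
  ultimately have "K_gen G pw S \<subseteq> T" by (rule Kgen_least)
  then have genall: "\<forall>x\<in>carrier G. NN #> x \<in> M.spanset ?gq m" using S(3) unfolding T_def by blast
  have gen0: "M.gen_over {NN} ?gq m" unfolding M.gen_over_def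
  proof (intro conjI ballI)
    show "\<forall>i<m. NN #> g i \<in> QA" using gqA .
    fix C assume "C \<in> QA"
    then obtain x where x: "x \<in> carrier G" "C = NN #> x" using QAc by blast
    then obtain c where "C = lc qadd NN qsm c ?gq m" using genall unfolding M.spanset_def by blast
    then show "\<exists>q\<in>{NN}. \<exists>c. C = qadd q (lc qadd NN qsm c ?gq m)" using M.zr_add M.lc_closed gqA by auto
  qed
  have genZ: "M.gen_over Zbar ?gq m" using gen0 subZ unfolding M.gen_over_def M.submod_def by blast
  obtain n e where ne: "M.gen_over Zbar e n" "M.indep_over Zbar e n"
    using M.basis_exists[OF pid subZ pureZ genZ] by blast
  have eA: "\<forall>i<n. e i \<in> QA" using ne unfolding M.gen_over_def by blast
  obtain w where w: "\<forall>i<m. w i \<in> Zbar" "\<forall>x\<in>Zbar. \<exists>q\<in>{NN}. \<exists>c. x = qadd q (lc qadd NN qsm c w m)"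
    using M.proj[OF sub0 subZ _ gen0 ne] subZ unfolding M.submod_def by blast
  interpret Zm: kmod Zbar qadd NN qsm by (rule M.submod_kmod[OF subZ])
  have NNZ: "NN \<in> Zbar" using subZ unfolding M.submod_def by blast
  have zsub0: "Zm.submod {NN}" unfolding Zm.submod_def using NNZ M.zr_add M.sm_zr NNQA by auto
  have zpure0: "Zm.pure {NN}" using pure0 ZbQA unfolding Zm.pure_def M.pure_def by blast
  have zgen: "Zm.gen_over {NN} w m" unfolding Zm.gen_over_def using w by blast
  obtain k f where kf: "Zm.gen_over {NN} f k" "Zm.indep_over {NN} f k"
    using Zm.basis_exists[OF pid zsub0 zpure0 zgen] by blast
  have fZ: "\<forall>i<k. f i \<in> Zbar" using kf unfolding Zm.gen_over_def by blast
  have fspan: "\<forall>x\<in>Zbar. \<exists>c. x = lc qadd NN qsm c f k"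
  proof
    fix x assume "x \<in> Zbar"
    then obtain c where "x = qadd NN (lc qadd NN qsm c f k)" using kf unfolding Zm.gen_over_def by blast
    then show "\<exists>c. x = lc qadd NN qsm c f k" using Zm.zr_add Zm.lc_closed fZ by auto
  qed
  have findep: "\<And>c. lc qadd NN qsm c f k = NN \<Longrightarrow> \<forall>i<k. c i = 0"
    using kf unfolding Zm.indep_over_def by blast
  have "\<forall>i<k. \<exists>z. z \<in> Zc \<and> f i = NN #> z" using fZ unfolding Zbar_def by blast
  then obtain z where z: "\<forall>i<k. z i \<in> Zc \<and> f i = NN #> z i" by metis
  have zZ: "\<forall>i<k. z i \<in> Zc" using z by blast
  have zc: "\<forall>i<k. z i \<in> carrier G" using zZ Zc_sub by blast
  have gpf: "\<And>c. NN #> gprod G pw c z k = lc qadd NN qsm c f k"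
  proof -
    fix c
    have "NN #> gprod G pw c z k = lc qadd NN qsm c (\<lambda>i. NN #> z i) k" using gp_coset zc by blast
    also have "\<dots> = lc qadd NN qsm c f k" using z by (intro M.lc_cong) auto
    finally show "NN #> gprod G pw c z k = lc qadd NN qsm c f k" .
  qed
  define G0 where "G0 = {gprod G pw c z k | c. True}"
  define H where "H = {x \<in> carrier G. NN #> x \<in> M.spanset e n}"
  have spe: "M.submod (M.spanset e n)" using M.spanset_submod eA by blast
  have G0Z: "G0 \<subseteq> Zc" unfolding G0_def using gp_Zc zZ by blast
  have G0c: "G0 \<subseteq> carrier G" using G0Z Zc_sub by blast
  have oneG0: "\<one> \<in> G0" unfolding G0_def using gp_zero[of k "\<lambda>_. 0" z] zc by (metis (mono_tags, lifting) mem_Collect_eq)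
  have G0K: "K_subgroup G pw G0" unfolding K_subgroup_def
  proof (intro conjI ballI allI)
    show "subgroup G0 G"
    proof (rule subgroup.intro)
      show "G0 \<subseteq> carrier G" by (rule G0c)
      show "\<one> \<in> G0" by (rule oneG0)
      fix x y assume "x \<in> G0" "y \<in> G0"
      then show "x \<otimes> y \<in> G0" unfolding G0_def using gp_mult[OF zZ] by auto
    next
      fix x assume "x \<in> G0"
      then show "inv x \<in> G0" unfolding G0_def using gp_inv[OF zZ] by auto
    qed
  next
    fix x a assume "x \<in> G0"
    then show "pw x a \<in> G0" unfolding G0_def using gp_pw[OF zZ] by auto
  qed
  have G0NN: "\<And>x. x \<in> G0 \<Longrightarrow> NN #> x \<in> Zbar \<Longrightarrow> NN #> x = NN \<Longrightarrow> x = \<one>"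
  proof -
    fix x assume "x \<in> G0" "NN #> x = NN"
    then obtain c where c: "x = gprod G pw c z k" unfolding G0_def by blast
    then have "lc qadd NN qsm c f k = NN" using gpf \<open>NN #> x = NN\<close> by simp
    then have "\<forall>i<k. c i = 0" using findep by blast
    then show "x = \<one>" using c gp_zero zc by blast
  qed
  have G0Zb: "\<And>x. x \<in> G0 \<Longrightarrow> NN #> x \<in> Zbar" using G0Z unfolding Zbar_def by blast
  have HK: "K_subgroup G pw H" unfolding K_subgroup_def
  proof (intro conjI ballI allI)
    show "subgroup H G"
    proof (rule subgroup.intro)
      show "H \<subseteq> carrier G" unfolding H_def by blast
      show "\<one> \<in> H" unfolding H_def using NN_one spe unfolding M.submod_def by simp
      fix x y assume "x \<in> H" "y \<in> H"
      then show "x \<otimes> y \<in> H" unfolding H_def using qadd_eq spe unfolding M.submod_def by (metis (mono_tags, lifting) m_closed mem_Collect_eq)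
    next
      fix x assume x: "x \<in> H"
      then have "qsm (-1) (NN #> x) \<in> M.spanset e n" unfolding H_def using spe unfolding M.submod_def by blast
      then show "inv x \<in> H" unfolding H_def using x qsm_eq pw_neg1 unfolding H_def by auto
    qed
  next
    fix x a assume x: "x \<in> H"
    then have "qsm a (NN #> x) \<in> M.spanset e n" unfolding H_def using spe unfolding M.submod_def by blast
    then show "pw x a \<in> H" using x qsm_eq unfolding H_def by auto
  qed
  have Hc: "H \<subseteq> carrier G" unfolding H_def by blast
  have ZH: "\<And>C. C \<in> Zbar \<Longrightarrow> C \<in> M.spanset e n \<Longrightarrow> C = NN"
  proof -
    fix C assume C: "C \<in> Zbar" "C \<in> M.spanset e n"
    then obtain d where d: "C = lc qadd NN qsm d e n" unfolding M.spanset_def by blast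
    then have "\<forall>i<n. d i = 0" using ne(2) C unfolding M.indep_over_def by blast
    then show "C = NN" using d M.lc_zero_coeffs eA by blast
  qed
  have decomp: "\<And>x. x \<in> carrier G \<Longrightarrow> \<exists>h\<in>H. \<exists>y\<in>G0. x = h \<otimes> y"
  proof -
    fix x assume x: "x \<in> carrier G"
    obtain q d where qd: "q \<in> Zbar" "NN #> x = qadd q (lc qadd NN qsm d e n)" using ne(1) rcQA[OF x] unfolding M.gen_over_def by blast
    obtain c where c: "q = lc qadd NN qsm c f k" using fspan qd by blast
    let ?y = "gprod G pw c z k"
    have yG0: "?y \<in> G0" unfolding G0_def by blast
    have yc: "?y \<in> carrier G" using yG0 G0c by blast
    have qy: "q = NN #> ?y" using c gpf by simp
    let ?E = "lc qadd NN qsm d e n"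
    have EA: "?E \<in> QA" using M.lc_closed eA by blast
    have qA: "q \<in> QA" using qd ZbQA by blast
    have "NN #> (x \<otimes> inv ?y) = qadd (NN #> x) (NN #> inv ?y)" using qadd_eq x yc by simp
    also have "NN #> inv ?y = qsm (-1) q" using qy qsm_eq yc pw_neg1 by simp
    also have "qadd (NN #> x) (qsm (-1) q) = qadd (qadd ?E q) (qsm (-1) q)" using qd M.add_comm EA qA by simp
    also have "\<dots> = ?E" using M.add_assoc EA qA M.sm_closed M.neg_r M.add_zr by simp
    finally have "NN #> (x \<otimes> inv ?y) \<in> M.spanset e n" unfolding M.spanset_def by blast
    then have "x \<otimes> inv ?y \<in> H" unfolding H_def using x yc by simp
    moreover have "x = (x \<otimes> inv ?y) \<otimes> ?y" using x yc by (simp add: m_assoc)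
    ultimately show "\<exists>h\<in>H. \<exists>y\<in>G0. x = h \<otimes> y" using yG0 by blast
  qed
  have add: "is_addition G pw G0" unfolding is_addition_def I_NN
  proof (intro conjI)
    show "K_subgroup G pw G0" by (rule G0K)
    show "G0 \<subseteq> Zc" by (rule G0Z)
    show "G0 \<inter> NN = {\<one>}"
    proof
      show "G0 \<inter> NN \<subseteq> {\<one>}"
      proof
        fix x assume x: "x \<in> G0 \<inter> NN"
        then have "NN #> x = NN" using NN_in_rc G0c by blast
        then show "x \<in> {\<one>}" using G0NN G0Zb x by blast
      qed
      show "{\<one>} \<subseteq> G0 \<inter> NN" using oneG0 subgroup.one_closed[OF NN_sg] by blast
    qed
    show "{a \<otimes> b |a b. a \<in> G0 \<and> b \<in> NN} = Zc"
    proof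
      show "{a \<otimes> b |a b. a \<in> G0 \<and> b \<in> NN} \<subseteq> Zc"
      proof
        fix t assume "t \<in> {a \<otimes> b |a b. a \<in> G0 \<and> b \<in> NN}"
        then obtain a b where "a \<in> G0" "b \<in> NN" "t = a \<otimes> b" by blast
        then show "t \<in> Zc" using G0Z NN_Zc Zc_mult by blast
      qed
      show "Zc \<subseteq> {a \<otimes> b |a b. a \<in> G0 \<and> b \<in> NN}"
      proof
        fix x assume x: "x \<in> Zc"
        have xc: "x \<in> carrier G" using x Zc_sub by blast
        have "NN #> x \<in> Zbar" unfolding Zbar_def using x by blast
        then obtain c where "NN #> x = lc qadd NN qsm c f k" using fspan by blast
        then have eq: "NN #> gprod G pw c z k = NN #> x" using gpf by simp
        have yc: "gprod G pw c z k \<in> carrier G" using gp_carrier zc by blast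
        obtain nn where nn: "nn \<in> NN" "x = nn \<otimes> gprod G pw c z k" using rc_eq[OF yc xc] eq by blast
        have "x = gprod G pw c z k \<otimes> nn" using nn Zc_comm[of nn "gprod G pw c z k"] NN_Zc yc by blast
        then show "x \<in> {a \<otimes> b |a b. a \<in> G0 \<and> b \<in> NN}" unfolding G0_def using nn by blast
      qed
    qed
  qed
  have HG0: "H \<inter> G0 = {\<one>}"
  proof
    show "H \<inter> G0 \<subseteq> {\<one>}"
    proof
      fix x assume x: "x \<in> H \<inter> G0"
      then have "NN #> x = NN" using ZH G0Zb unfolding H_def by blast
      then show "x \<in> {\<one>}" using G0NN G0Zb x by blast
    qed
    have "subgroup H G" using HK unfolding K_subgroup_def by blast
    then show "{\<one>} \<subseteq> H \<inter> G0" using oneG0 subgroup.one_closed by blast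
  qed
  have prod: "{h \<otimes> g |h g. h \<in> H \<and> g \<in> G0} = carrier G"
    using decomp Hc G0c by blast
  have cent: "center_of G H \<subseteq> isolator G pw H (derived G pw H)"
  proof
    fix x assume x: "x \<in> center_of G H"
    then have xH: "x \<in> H" and xcomm: "\<forall>y\<in>H. x \<otimes> y = y \<otimes> x" unfolding center_of_def by blast+
    have xc: "x \<in> carrier G" using xH Hc by blast
    have xZ: "x \<in> Zc" unfolding center_of_def
    proof (intro CollectI conjI ballI)
      show "x \<in> carrier G" by (rule xc)
      fix y assume y: "y \<in> carrier G"
      then obtain h g0 where hg: "h \<in> H" "g0 \<in> G0" "y = h \<otimes> g0" using decomp by blast
      have hc: "h \<in> carrier G" using hg Hc by blast
      have g0Z: "g0 \<in> Zc" using hg G0Z by blast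
      have g0c: "g0 \<in> carrier G" using g0Z Zc_sub by blast
      have "x \<otimes> y = (x \<otimes> h) \<otimes> g0" using hg xc hc g0c by (simp add: m_assoc)
      also have "\<dots> = h \<otimes> (x \<otimes> g0)" using xcomm hg xc hc g0c by (simp add: m_assoc)
      also have "\<dots> = h \<otimes> (g0 \<otimes> x)" using Zc_comm[OF g0Z xc] by simp
      also have "\<dots> = y \<otimes> x" using hg xc hc g0c by (simp add: m_assoc)
      finally show "x \<otimes> y = y \<otimes> x" .
    qed
    have "NN #> x \<in> Zbar" unfolding Zbar_def using xZ by blast
    then have "NN #> x = NN" using ZH xH unfolding H_def by blast
    then have "x \<in> NN" using NN_in_rc xc by blast
    then obtain a where a: "a \<noteq> 0" "pw x a \<in> Gd" unfolding isolator_def by blast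
    have CH: "{gcomm G u v |u v. u \<in> H \<and> v \<in> H} \<subseteq> carrier G" using Hc gcomm_closed by blast
    have "{gcomm G u v |u v. u \<in> carrier G \<and> v \<in> carrier G} \<subseteq> {gcomm G u v |u v. u \<in> H \<and> v \<in> H}"
    proof
      fix t assume "t \<in> {gcomm G u v |u v. u \<in> carrier G \<and> v \<in> carrier G}"
      then obtain u v where uv: "u \<in> carrier G" "v \<in> carrier G" "t = gcomm G u v" by blast
      obtain h1 g1 where 1: "h1 \<in> H" "g1 \<in> G0" "u = h1 \<otimes> g1" using decomp uv by blast
      obtain h2 g2 where 2: "h2 \<in> H" "g2 \<in> G0" "v = h2 \<otimes> g2" using decomp uv by blast
      have hc: "h1 \<in> carrier G" "h2 \<in> carrier G" using 1 2 Hc by blast+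
      have gz: "g1 \<in> Zc" "g2 \<in> Zc" using 1 2 G0Z by blast+
      have "t = gcomm G h1 (h2 \<otimes> g2)" using uv 1 2 gcomm_Zl[OF hc(1) _ gz(1)] hc gz Zc_sub by auto
      also have "\<dots> = gcomm G h1 h2" using gcomm_Zr hc gz by blast
      finally show "t \<in> {gcomm G u v |u v. u \<in> H \<and> v \<in> H}" using 1 2 by blast
    qed
    also have "\<dots> \<subseteq> derived G pw H" unfolding derived_def by (rule Kgen_incl)
    finally have "Gd \<subseteq> derived G pw H" unfolding derived_def[of G pw "carrier G"]
      using Kgen_least Kgen_K[OF CH] unfolding derived_def by blast
    then show "x \<in> isolator G pw H (derived G pw H)" unfolding isolator_def using a xH by blast
  qed
  show ?thesis unfolding K_regular_def using add HK cent HG0 prod by blast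
qed

end

theorem mainTheorem11:
  fixes G :: "('g, 'm) monoid_scheme" and pw :: "'g \<Rightarrow> 'k::idom \<Rightarrow> 'g"
  assumes "binomial_domain TYPE('k)"
    and "principal_ideal_domain TYPE('k)"
    and "K_group2 G pw"
    and "K_finitely_generated G pw"
    and "K_torsion_free G pw"
  shows "K_regular G pw"
proof -
  interpret kg2 G pw using assms(3,5) by unfold_locales
  show ?thesis using regular_main assms(2,4) by blast
qed


end
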